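(* Let $R$ be a commutative ring in which $2$ is invertible and $n\ge3$. Equip $R^{2n+1}$ with the standard form of matrix $\tilde\phi_{2n+1}=(2)\perp\widetilde{\psi}_n$. Let $u=(0,u_1',u_1'',u_2',u_2'',\dots,u_n',u_n'')\in R^{2n+1}$ be an isotropic unimodular vector and $v=(0,v_1',v_1'',\dots,v_n',v_n'')\in R^{2n+1}$ with $\langle u,v\rangle=0$. Then $\sigma_{u,v}\in\mathrm{EO}_{2n+1}(R)$.
   Context: $e_{i,j}$ are matrix units and $\widetilde{\psi}_s=\sum_{i=1}^s(e_{2i-1,2i}+e_{2i,2i-1})$. On $R^{2n+1}$ with coordinates $(a_1,a_1',a_1'',\dots,a_n',a_n'')$ the bilinear form is $\langle a,b\rangle=a^t\tilde\phi_{2n+1}b=2a_1b_1+\sum_i(a_i'b_i''+a_i''b_i')$ and the quadratic form is $q(a)=\tfrac12\langle a,a\rangle=a_1^2+\sum_ia_i'a_i''$. For $u,v$ with $u$ unimodular, $q(u)=0$, $\langle u,v\rangle=0$ and $r=q(v)$, the Eichler–Siegel–Dickson transvection is $\sigma_{u,v}(x)=x+\langle v,x\rangle u-\langle u,x\rangle v-r\langle u,x\rangle u$. Odd elementary orthogonal group: for $N=2s+1$ and $1\le i\le s$, $\lambda\in R$, $F^1_i(\lambda)=I_N+\lambda(e_{1,2i+1}-2e_{2i,1}-\lambda e_{2i,2i+1})$, $F^2_i(\lambda)=I_N+\lambda(e_{1,2i}-2e_{2i+1,1}-\lambda e_{2i+1,2i})$; $\mathrm{EO}_{2s+1}(R)$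 is the group they generate. *)

theory Defs
  imports "Jordan_Normal_Form.Matrix"
begin

text \<open>Conventions: matrices and vectors are 0-indexed (Jordan_Normal_Form).
  Paper index k (1..N) corresponds to index k-1 here. So coordinate 0 is a_1,
  coordinate 2i-1 is a_i', coordinate 2i is a_i'' (1 \<le> i \<le> n).\<close>

definition munit :: "nat \<Rightarrow> nat \<Rightarrow> nat \<Rightarrow> 'a::{zero,one} mat" where
  "munit N i j = mat N N (\<lambda>(a,b). if a = i \<and> b = j then 1 else 0)"

text \<open>psi_s = sum_{i=1}^s (e_{2i-1,2i} + e_{2i,2i-1}) (1-indexed), a 2s x 2s matrix, written entrywise (0-indexed).\<close>
definition psi_tilde :: "nat \<Rightarrow> 'a::comm_ring_1 mat" where
  "psi_tilde s = mat (2*s) (2*s) (\<lambda>(a,b).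
     if \<exists>i\<in>{1..s}. (a = 2*i-2 \<and> b = 2*i-1) \<or> (a = 2*i-1 \<and> b = 2*i-2) then 1 else 0)"

definition phi_tilde :: "nat \<Rightarrow> 'a::comm_ring_1 mat" where
  "phi_tilde n = four_block_mat (mat 1 1 (\<lambda>_. 2)) (0\<^sub>m 1 (2*n)) (0\<^sub>m (2*n) 1) (psi_tilde n)"

definition bform :: "nat \<Rightarrow> 'a::comm_ring_1 vec \<Rightarrow> 'a vec \<Rightarrow> 'a" where
  "bform n a b = a \<bullet> (phi_tilde n *\<^sub>v b)"

definition qform :: "nat \<Rightarrow> 'a::comm_ring_1 vec \<Rightarrow> 'a" where
  "qform n a = (a $ 0)^2 + (\<Sum>i\<in>{1..n}. a $ (2*i-1) * a $ (2*i))"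

definition unimodular :: "nat \<Rightarrow> 'a::comm_ring_1 vec \<Rightarrow> bool" where
  "unimodular N u \<longleftrightarrow> (\<exists>w \<in> carrier_vec N. u \<bullet> w = 1)"

definition esd :: "nat \<Rightarrow> 'a::comm_ring_1 vec \<Rightarrow> 'a vec \<Rightarrow> 'a vec \<Rightarrow> 'a vec" where
  "esd n u v x = x + bform n v x \<cdot>\<^sub>v u - bform n u x \<cdot>\<^sub>v v
                  - (qform n v * bform n u x) \<cdot>\<^sub>v u"

definition esd_mat :: "nat \<Rightarrow> 'a::comm_ring_1 vec \<Rightarrow> 'a vec \<Rightarrow> 'a mat" where
  "esd_mat n u v = mat (2*n+1) (2*n+1) (\<lambda>(i,j). esd n u v (unit_vec (2*n+1) j) $ i)"

text \<open>Generators, N = 2s+1, 1 \<le> i \<le> s (paper indices shifted by -1):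
  F1_i(l) = I + l(e_{1,2i+1} - 2 e_{2i,1} - l e_{2i,2i+1}),
  F2_i(l) = I + l(e_{1,2i} - 2 e_{2i+1,1} - l e_{2i+1,2i}).\<close>
definition F1 :: "nat \<Rightarrow> nat \<Rightarrow> 'a::comm_ring_1 \<Rightarrow> 'a mat" where
  "F1 N i l = 1\<^sub>m N + l \<cdot>\<^sub>m (munit N 0 (2*i) - 2 \<cdot>\<^sub>m munit N (2*i-1) 0 - l \<cdot>\<^sub>m munit N (2*i-1) (2*i))"

definition F2 :: "nat \<Rightarrow> nat \<Rightarrow> 'a::comm_ring_1 \<Rightarrow> 'a mat" where
  "F2 N i l = 1\<^sub>m N + l \<cdot>\<^sub>m (munit N 0 (2*i-1) - 2 \<cdot>\<^sub>m munit N (2*i) 0 - l \<cdot>\<^sub>m munit N (2*i) (2*i-1))"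

definition EO_gens :: "nat \<Rightarrow> 'a::comm_ring_1 mat set" where
  "EO_gens s = {F1 (2*s+1) i l | i l. 1 \<le> i \<and> i \<le> s} \<union> {F2 (2*s+1) i l | i l. 1 \<le> i \<and> i \<le> s}"

text \<open>EO_{2s+1}(R): the subgroup of GL_{2s+1}(R) generated by the F's
  (closed under identity, right multiplication by generators and by their inverses).\<close>
inductive_set EO :: "nat \<Rightarrow> 'a::comm_ring_1 mat set" for s where
  EO_one: "1\<^sub>m (2*s+1) \<in> EO s"
| EO_gen: "A \<in> EO s \<Longrightarrow> G \<in> EO_gens s \<Longrightarrow> A * G \<in> EO s"
| EO_inv: "A \<in> EO s \<Longrightarrow> G \<in> EO_gens s \<Longrightarrow> B \<in> carrier_mat (2*s+1) (2*s+1)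
           \<Longrightarrow> B * G = 1\<^sub>m (2*s+1) \<Longrightarrow> G * B = 1\<^sub>m (2*s+1) \<Longrightarrow> A * B \<in> EO s"

end

theory Submission
  imports Defs
begin



definition dual :: "nat \<Rightarrow> nat" where
  "dual k = (if k = 0 then 0 else if odd k then k+1 else k-1)"
definition wt :: "nat \<Rightarrow> 'a::comm_ring_1" where
  "wt k = (if k = 0 then 2 else 1)"

lemma psi_cond:
  assumes "i < 2*n+1" "j < 2*n+1" "i \<noteq> 0" "j \<noteq> 0"
  shows "(\<exists>t\<in>{1..n}. (i - 1 = 2*t-2 \<and> j - 1 = 2*t-1) \<or> (i - 1 = 2*t-1 \<and> j - 1 = 2*t-2))
     \<longleftrightarrow> j = dual i"
proof
  assume "\<exists>t\<in>{1..n}. (i - 1 = 2*t-2 \<and> j - 1 = 2*t-1) \<or> (i - 1 = 2*t-1 \<and> j - 1 = 2*t-2)"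
  then show "j = dual i" using assms unfolding dual_def by auto presburger+
next
  assume j: "j = dual i"
  show "\<exists>t\<in>{1..n}. (i - 1 = 2*t-2 \<and> j - 1 = 2*t-1) \<or> (i - 1 = 2*t-1 \<and> j - 1 = 2*t-2)"
  proof (cases "odd i")
    case True
    then obtain t where t: "i = 2*t+1" by (metis oddE)
    show ?thesis using assms j t True unfolding dual_def
      by (intro bexI[of _ "t+1"]) auto
  next
    case False
    then obtain t where t: "i = 2*t" by (metis evenE)
    show ?thesis using assms j t False unfolding dual_def
      by (intro bexI[of _ "t"]) auto
  qed
qed

lemma phi_entry:
  assumes "i < 2*n+1" "j < 2*n+1"
  shows "(phi_tilde n :: 'a::comm_ring_1 mat) $$ (i,j) = (if j = dual i then wt i else 0)"
proof -
  have "(phi_tilde n :: 'a mat) $$ (i,j) = (if i = 0 then (if j = 0 then 2 else 0) else if j = 0 then 0 else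
     (psi_tilde n :: 'a mat) $$ (i - 1, j - 1))"
    using assms unfolding phi_tilde_def by (simp add: psi_tilde_def)
  also have "\<dots> = (if j = dual i then wt i else 0)"
    using assms psi_cond[OF assms] unfolding psi_tilde_def wt_def
    by (auto simp: dual_def)
  finally show ?thesis .
qed




definition NN :: "nat \<Rightarrow> nat" where "NN n = 2*n+1"

definition bf :: "nat \<Rightarrow> 'a::comm_ring_1 vec \<Rightarrow> 'a vec \<Rightarrow> 'a" where
  "bf n x y = (\<Sum>k<NN n. x$k * wt k * y$(dual k))"

lemma dual_lt: "k < 2*n+1 \<Longrightarrow> dual k < 2*n+1"
  unfolding dual_def by auto presburger
lemma dual_lt': "k < Suc (2*n) \<Longrightarrow> dual k < Suc (2*n)" "k < Suc (n*2) \<Longrightarrow> dual k < Suc (n*2)"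
  using dual_lt[of k n] by (auto simp: mult.commute)
lemma dual_ltN: "odd N \<Longrightarrow> k < N \<Longrightarrow> dual k < N"
  by (metis dual_lt oddE)
lemma dual_NN[simp]: "k < NN n \<Longrightarrow> dual k < NN n"
  unfolding NN_def by (rule dual_lt)
lemma odd_NN[simp]: "odd (NN n)" unfolding NN_def by simp

lemma dual_dual[simp]: "dual (dual k) = k"
  unfolding dual_def by auto

lemma dual_eq_iff: "dual k = j \<longleftrightarrow> k = dual j"
  by (metis dual_dual)

lemma wt_dual[simp]: "wt (dual k) = wt k"
  unfolding wt_def dual_def by auto

lemma phi_carrier: "(phi_tilde n :: 'a::comm_ring_1 mat) \<in> carrier_mat (2*n+1) (2*n+1)"
  unfolding phi_tilde_def psi_tilde_def
  by (rule carrier_matI) auto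

lemma phi_dims[simp]: "dim_row (phi_tilde n :: 'a::comm_ring_1 mat) = 2*n+1" "dim_col (phi_tilde n :: 'a::comm_ring_1 mat) = 2*n+1"
  using phi_carrier[of n] by auto

lemma phi_mult_idx:
  assumes y: "y \<in> carrier_vec (2*n+1)" and i: "i < 2*n+1"
  shows "(phi_tilde n *\<^sub>v y) $ i = wt i * (y $ dual i :: 'a::comm_ring_1)"
proof -
  have "(phi_tilde n *\<^sub>v y) $ i = row (phi_tilde n) i \<bullet> y"
    using phi_carrier[of n] i by (metis carrier_matD(1) index_mult_mat_vec)
  also have "\<dots> = (\<Sum>j\<in>{0..<2*n+1}. (phi_tilde n :: 'a mat) $$ (i,j) * y $ j)"
    unfolding scalar_prod_def using y phi_carrier[of n] i by (intro sum.cong) auto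
  also have "\<dots> = (\<Sum>j\<in>{0..<2*n+1}. if j = dual i then wt i * y $ j else 0)"
    apply (rule sum.cong, simp)
    subgoal for j using phi_entry[of i n j, where 'a='a] i by auto
    done
  also have "\<dots> = wt i * y $ dual i"
    using dual_lt[OF i] by (simp add: sum.delta)
  finally show ?thesis .
qed

lemma bform_bf:
  assumes y: "y \<in> carrier_vec (NN n)"
  shows "bform n x y = bf n x (y::'a::comm_ring_1 vec)"
proof -
  have d: "dim_vec (phi_tilde n *\<^sub>v y) = 2*n+1" using phi_carrier[of n] by auto
  show ?thesis
    unfolding bform_def bf_def scalar_prod_def d NN_def
    apply (rule sum.cong)
     apply simp
    using phi_mult_idx[of y n] y by (auto simp: mult.assoc NN_def)
qed

lemma bf_sym: "bf n x y = bf n y x"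
  unfolding bf_def
  by (rule sum.reindex_bij_witness[of _ dual dual]) (auto simp: mult.commute mult.left_commute)

context fixes n :: nat begin
abbreviation "VV \<equiv> carrier_vec (NN n)"
end

lemma bf_add_right: "y \<in> VV n \<Longrightarrow> z \<in> VV n \<Longrightarrow> bf n x (y + z) = bf n x y + bf n x z"
  unfolding bf_def sum.distrib[symmetric] by (rule sum.cong) (auto simp: algebra_simps)
lemma bf_diff_right: "y \<in> VV n \<Longrightarrow> z \<in> VV n \<Longrightarrow> bf n x (y - z) = bf n x y - bf n x z"
  unfolding bf_def sum_subtractf[symmetric] by (rule sum.cong) (auto simp: algebra_simps)
lemma bf_smult_right: "y \<in> VV n \<Longrightarrow> bf n x (c \<cdot>\<^sub>v y) = c * bf n x y"
  unfolding bf_def sum_distrib_left by (rule sum.cong) (auto simp: algebra_simps)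
lemma bf_uminus_right: "y \<in> VV n \<Longrightarrow> bf n x (- y) = - bf n x y"
  unfolding bf_def sum_negf[symmetric] by (rule sum.cong) (auto simp: algebra_simps)
lemma bf_zero_right: "bf n x (0\<^sub>v (NN n)) = 0"
  unfolding bf_def by (rule sum.neutral) auto

lemma bf_add_left: "y \<in> VV n \<Longrightarrow> z \<in> VV n \<Longrightarrow> bf n (y + z) x = bf n y x + bf n z x"
  by (metis bf_add_right bf_sym)
lemma bf_diff_left: "y \<in> VV n \<Longrightarrow> z \<in> VV n \<Longrightarrow> bf n (y - z) x = bf n y x - bf n z x"
  by (metis bf_diff_right bf_sym)
lemma bf_smult_left: "y \<in> VV n \<Longrightarrow> bf n (c \<cdot>\<^sub>v y) x = c * bf n y x"
  by (metis bf_smult_right bf_sym)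
lemma bf_uminus_left: "y \<in> VV n \<Longrightarrow> bf n (- y) x = - bf n y x"
  by (metis bf_uminus_right bf_sym)
lemma bf_zero_left: "bf n (0\<^sub>v (NN n)) x = 0"
  by (metis bf_zero_right bf_sym)

lemmas bf_lin = bf_add_right bf_diff_right bf_smult_right bf_uminus_right bf_zero_right
  bf_add_left bf_diff_left bf_smult_left bf_uminus_left bf_zero_left

lemma unit_dual:
  assumes "odd N" "j < N" "k < N"
  shows "(unit_vec N j :: 'a::comm_ring_1 vec) $ dual k = (if k = dual j then 1 else 0)"
  using assms dual_ltN[of N k] by (auto simp: dual_eq_iff)

lemma bf_unit_right:
  assumes j: "j < NN n"
  shows "bf n x (unit_vec (NN n) j) = wt j * (x $ dual j :: 'a::comm_ring_1)"
proof -
  have "bf n x (unit_vec (NN n) j) = (\<Sum>k<NN n. if k = dual j then x$k * wt k else 0)"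
    unfolding bf_def by (rule sum.cong) (use j in \<open>auto simp: unit_dual\<close>)
  also have "\<dots> = wt j * x $ dual j" using j by (simp add: sum.delta mult.commute)
  finally show ?thesis .
qed

lemma bf_unit_left:
  assumes j: "j < NN n"
  shows "bf n (unit_vec (NN n) j) x = wt j * (x $ dual j :: 'a::comm_ring_1)"
  using bf_unit_right[OF j] bf_sym by metis

lemma bf_sum_formula:
  "(\<Sum>k<2*m+1. x$k * wt k * x$(dual k)) = 2 * ((x$0)^2 + (\<Sum>i\<in>{1..m}. x$(2*i-1) * x$(2*i)) :: 'a::comm_ring_1)"
proof (induction m)
  case 0
  then show ?case by (simp add: wt_def dual_def power2_eq_square)
next
  case (Suc m)
  have e: "2 * Suc m + 1 = Suc (Suc (2*m+1))" by simp
  have d1: "dual (2*m+1) = 2*m+2" "dual (Suc (2*m+1)) = 2*m+1" unfolding dual_def by auto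
  have w1: "wt (2*m+1) = (1::'a)" "wt (Suc (2*m+1)) = (1::'a)" unfolding wt_def by auto
  show ?case unfolding e sum.lessThan_Suc Suc d1 w1
    by (simp add: algebra_simps)
qed

lemma Q_bf: "2 * qform n x = bf n x (x::'a::comm_ring_1 vec)"
  unfolding qform_def bf_def NN_def bf_sum_formula by simp




locale hc = fixes n :: nat and h :: "'a::comm_ring_1" assumes two_h: "2*h = 1"
begin

lemma h2: "h * (2 * b) = b" "2 * (h * b) = b" "h * (b * 2) = b"
  using two_h by (metis mult.assoc mult.commute mult_1)+

lemma Q_h: "qform n (x::'a vec) = h * bf n x x"
  by (metis Q_bf h2(1))

lemma bf_uu: "qform n (u::'a vec) = 0 \<Longrightarrow> bf n u u = 0"
  by (metis Q_bf mult_zero_right)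

lemma Q_add: "(x::'a vec) \<in> VV n \<Longrightarrow> y \<in> VV n \<Longrightarrow> qform n (x+y) = qform n x + qform n y + bf n x y"
proof -
  assume xy: "x \<in> VV n" "y \<in> VV n"
  have "qform n (x+y) = h * (bf n x x + bf n y y) + h * (2 * bf n x y)"
    unfolding Q_h using xy by (simp add: bf_lin algebra_simps bf_sym[of n y x])
  then show ?thesis unfolding h2 Q_h by (simp add: algebra_simps)
qed

lemma Q_smult: "(x::'a vec) \<in> VV n \<Longrightarrow> qform n (c \<cdot>\<^sub>v x) = c^2 * qform n x"
  unfolding Q_h by (simp add: bf_lin algebra_simps power2_eq_square)

lemma Q_uminus: "(x::'a vec) \<in> VV n \<Longrightarrow> qform n (- x) = qform n x"
  unfolding Q_h by (simp add: bf_lin algebra_simps)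

lemma Q_zero: "qform n (0\<^sub>v (NN n)) = (0::'a)"
  unfolding Q_h by (simp add: bf_lin)

lemma esd_expand: "(x::'a vec) \<in> VV n \<Longrightarrow> esd n u v x = x + bf n v x \<cdot>\<^sub>v u - bf n u x \<cdot>\<^sub>v v - (qform n v * bf n u x) \<cdot>\<^sub>v u"
  unfolding esd_def by (simp add: bform_bf)

lemma esd_carrier[simp]: "(u::'a vec) \<in> VV n \<Longrightarrow> v \<in> VV n \<Longrightarrow> x \<in> VV n \<Longrightarrow> esd n u v x \<in> VV n"
  by (simp add: esd_expand)

lemma esd_dim[simp]: "(u::'a vec) \<in> VV n \<Longrightarrow> v \<in> VV n \<Longrightarrow> x \<in> VV n \<Longrightarrow> dim_vec (esd n u v x) = NN n"
  using esd_carrier carrier_vecD by blast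

lemma esd_idx: "(u::'a vec) \<in> VV n \<Longrightarrow> v \<in> VV n \<Longrightarrow> x \<in> VV n \<Longrightarrow> i < NN n \<Longrightarrow>
  esd n u v x $ i = x$i + bf n v x * u$i - bf n u x * v$i - qform n v * bf n u x * u$i"
  by (simp add: esd_expand)

lemma bf_esd_right: "(u::'a vec) \<in> VV n \<Longrightarrow> v \<in> VV n \<Longrightarrow> x \<in> VV n \<Longrightarrow>
  bf n y (esd n u v x) = bf n y x + bf n v x * bf n y u - bf n u x * bf n y v - qform n v * bf n u x * bf n y u"
  by (simp add: esd_expand bf_lin)

lemma bf_esd_left: "(u::'a vec) \<in> VV n \<Longrightarrow> v \<in> VV n \<Longrightarrow> x \<in> VV n \<Longrightarrow>
  bf n (esd n u v x) y = bf n x y + bf n v x * bf n u y - bf n u x * bf n v y - qform n v * bf n u x * bf n u y"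
  by (simp add: bf_esd_right bf_sym[of n _ y])

definition Good where "Good (u::'a vec) v \<longleftrightarrow> u \<in> VV n \<and> v \<in> VV n \<and> qform n u = 0 \<and> bf n u v = 0"

lemma esd_orth:
  assumes g: "Good u v" and x: "x \<in> VV n" and y: "y \<in> VV n"
  shows "bf n (esd n u v x) (esd n u v y) = bf n x y"
proof -
  have u: "u \<in> VV n" and v: "v \<in> VV n" and qu: "qform n u = 0" and uv: "bf n u v = 0"
    using g unfolding Good_def by auto
  have uu: "bf n u u = 0" using bf_uu[OF qu] .
  have vv: "bf n v v = 2 * qform n v" using Q_bf by metis
  have vu: "bf n v u = 0" using uv bf_sym by metis
  show ?thesis
    using u v x y
    apply (simp add: bf_esd_left bf_esd_right uu vv vu uv)
    apply (simp add: bf_sym[of n x u] bf_sym[of n x v] bf_sym[of n y u] bf_sym[of n y v] bf_sym[of n y x] algebra_simps)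
    done
qed

lemma esd_Q:
  assumes g: "Good u v" and x: "x \<in> VV n"
  shows "qform n (esd n u v x) = qform n x"
  using esd_orth[OF g x x] Q_h by metis

lemma esd_comp:
  assumes g1: "Good u v" and g2: "Good u w" and x: "x \<in> VV n"
  shows "esd n u v (esd n u w x) = esd n u (v + w) x"
proof -
  have u: "u \<in> VV n" and v: "v \<in> VV n" and qu: "qform n u = 0" and uv: "bf n u v = 0"
    and w: "w \<in> VV n" and uw: "bf n u w = 0"
    using g1 g2 unfolding Good_def by auto
  have uu: "bf n u u = 0" using bf_uu[OF qu] .
  have vu: "bf n v u = 0" using uv bf_sym by metis
  show ?thesis
  proof (rule eq_vecI)
    fix i assume "i < dim_vec (esd n u (v + w) x)"
    then have i: "i < NN n" using u v w x by simp
    show "esd n u v (esd n u w x) $ i = esd n u (v + w) x $ i"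
      using u v w x i
      apply (simp add: esd_idx bf_esd_right Q_add uu vu uv uw bf_lin)
      apply (simp add: algebra_simps)
      done
  qed (use u v w x in simp)
qed

lemma esd_conj:
  assumes g: "Good a b" and u: "u \<in> VV n" and v: "v \<in> VV n" and x: "x \<in> VV n"
  shows "esd n a b (esd n u v x) = esd n (esd n a b u) (esd n a b v) (esd n a b x)"
proof -
  have a: "a \<in> VV n" and b: "b \<in> VV n"
    using g unfolding Good_def by auto
  show ?thesis
  proof (rule eq_vecI)
    fix i assume "i < dim_vec (esd n (esd n a b u) (esd n a b v) (esd n a b x))"
    then have i: "i < NN n" using u v a b x by simp
    have e: "esd n (esd n a b u) (esd n a b v) (esd n a b x) $ i =
      esd n a b x $ i + bf n v x * esd n a b u $ i - bf n u x * esd n a b v $ i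
        - qform n v * bf n u x * esd n a b u $ i"
      using esd_idx[of "esd n a b u" "esd n a b v" "esd n a b x" i] a b u v x i
      by (simp add: esd_orth[OF g] esd_Q[OF g])
    show "esd n a b (esd n u v x) $ i = esd n (esd n a b u) (esd n a b v) (esd n a b x) $ i"
      unfolding e using u v a b x i
      apply (simp add: esd_idx bf_esd_right)
      apply (simp add: algebra_simps)
      done
  qed (use u v a b x in simp)
qed

lemma esd_swap:
  assumes u: "(u::'a vec) \<in> VV n" and v: "v \<in> VV n" and qu: "qform n u = 0" and qv: "qform n v = 0"
    and x: "x \<in> VV n"
  shows "esd n u v x = esd n v (- u) x"
  using u v x qu qv
  by (intro eq_vecI) (simp_all add: esd_idx bf_lin Q_uminus algebra_simps)

lemma esd_smult_first:
  assumes u: "(u::'a vec) \<in> VV n" and v: "v \<in> VV n" and x: "x \<in> VV n"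
  shows "esd n (c \<cdot>\<^sub>v u) v x = esd n u (c \<cdot>\<^sub>v v) x"
  using u v x
  by (intro eq_vecI) (simp_all add: esd_idx bf_lin Q_smult algebra_simps power2_eq_square)

lemma esd_add_u:
  assumes g: "Good u v" and x: "x \<in> VV n"
  shows "esd n u (v + c \<cdot>\<^sub>v u) x = esd n u v x"
proof -
  have u: "u \<in> VV n" and v: "v \<in> VV n" and qu: "qform n u = 0" and uv: "bf n u v = 0"
    using g unfolding Good_def by auto
  have uu: "bf n u u = 0" using bf_uu[OF qu] .
  show ?thesis
    using u v x
    by (intro eq_vecI) (simp_all add: esd_idx bf_lin Q_add Q_smult qu uv uu bf_sym[of n v u] algebra_simps)
qed

lemma esd_zero:
  assumes u: "(u::'a vec) \<in> VV n" and x: "x \<in> VV n"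
  shows "esd n u (0\<^sub>v (NN n)) x = x"
  using u x by (intro eq_vecI) (simp_all add: esd_idx bf_lin Q_zero)

end



lemma esd_mat_carrier[simp]: "esd_mat n u v \<in> carrier_mat (NN n) (NN n)"
  unfolding esd_mat_def NN_def by auto

lemma esd_mat_dims[simp]: "dim_row (esd_mat n u v) = NN n" "dim_col (esd_mat n u v) = NN n"
  unfolding esd_mat_def NN_def by auto

lemma mat_eq_vec:
  assumes A: "A \<in> carrier_mat N N" and B: "B \<in> carrier_mat N N"
    and e: "\<And>x. x \<in> carrier_vec N \<Longrightarrow> A *\<^sub>v x = B *\<^sub>v (x :: 'a::comm_ring_1 vec)"
  shows "A = B"
proof (rule eq_matI)
  fix i j assume i: "i < dim_row B" and j: "j < dim_col B"
  have "A $$ (i,j) = (A *\<^sub>v unit_vec N j) $ i"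
    using A B i j by (simp add: scalar_prod_right_unit)
  also have "\<dots> = (B *\<^sub>v unit_vec N j) $ i" using e[of "unit_vec N j"] by simp
  also have "\<dots> = B $$ (i,j)" using B i j by (simp add: scalar_prod_right_unit)
  finally show "A $$ (i,j) = B $$ (i,j)" .
qed (use A B in auto)

context hc begin

lemma S_vec:
  assumes u: "(u::'a vec) \<in> VV n" and v: "v \<in> VV n" and x: "x \<in> VV n"
  shows "esd_mat n u v *\<^sub>v x = esd n u v x"
proof (rule eq_vecI)
  fix i assume "i < dim_vec (esd n u v x)"
  then have i: "i < NN n" using u v x by simp
  have "(esd_mat n u v *\<^sub>v x) $ i = (\<Sum>j\<in>{0..<NN n}. esd_mat n u v $$ (i,j) * x $ j)"
    using i x by (simp add: scalar_prod_def)
  also have "\<dots> = (\<Sum>j\<in>{0..<NN n}. (if j = i then x $ j else 0) + (x$j * wt j * v $ dual j) * u $ i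
       - (x$j * wt j * u $ dual j) * v $ i - qform n v * (x$j * wt j * u $ dual j) * u $ i)"
  proof (rule sum.cong)
    fix j assume "j \<in> {0..<NN n}"
    then have j: "j < NN n" by simp
    have "esd_mat n u v $$ (i,j) = esd n u v (unit_vec (NN n) j) $ i"
      unfolding esd_mat_def using i j by (simp add: NN_def)
    also have "\<dots> = (if i = j then 1 else 0) + wt j * v $ dual j * u $ i - wt j * u $ dual j * v $ i
        - qform n v * (wt j * u $ dual j) * u $ i"
      using esd_idx[OF u v _ i, of "unit_vec (NN n) j"] i j bf_unit_right[OF j, of u] bf_unit_right[OF j, of v] by simp
    finally have E: "esd_mat n u v $$ (i,j) = (if i = j then 1 else 0) + wt j * v $ dual j * u $ i - wt j * u $ dual j * v $ i
        - qform n v * (wt j * u $ dual j) * u $ i" .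
    show "esd_mat n u v $$ (i,j) * x $ j = (if j = i then x $ j else 0) + (x$j * wt j * v $ dual j) * u $ i
       - (x$j * wt j * u $ dual j) * v $ i - qform n v * (x$j * wt j * u $ dual j) * u $ i"
      unfolding E by (auto simp: algebra_simps)
  qed simp
  also have "\<dots> = x $ i + bf n x v * u $ i - bf n x u * v $ i - qform n v * bf n x u * u $ i"
    unfolding sum.distrib sum_subtractf bf_def sum_distrib_right[symmetric] sum_distrib_left[symmetric]
    using i by (simp add: sum.delta atLeast0LessThan)
  also have "\<dots> = esd n u v x $ i"
    using esd_idx[OF u v x i] by (simp add: bf_sym[of n x])
  finally show "(esd_mat n u v *\<^sub>v x) $ i = esd n u v x $ i" .
qed (use u v x in simp)

lemma S_comp:
  assumes g1: "Good u v" and g2: "Good u w"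
  shows "esd_mat n u v * esd_mat n u w = esd_mat n u (v + w)"
proof (rule mat_eq_vec)
  have u: "u \<in> VV n" and v: "v \<in> VV n" and w: "w \<in> VV n" using g1 g2 unfolding Good_def by auto
  fix x :: "'a vec" assume x: "x \<in> VV n"
  show "esd_mat n u v * esd_mat n u w *\<^sub>v x = esd_mat n u (v + w) *\<^sub>v x"
    using u v w x
    by (simp add: S_vec esd_comp[OF g1 g2 x] assoc_mult_mat_vec[of "esd_mat n u v" "NN n" "NN n" "esd_mat n u w" "NN n" x])
qed auto

lemma S_conj:
  assumes g: "Good a b" and u: "u \<in> VV n" and v: "v \<in> VV n"
  shows "esd_mat n a b * esd_mat n u v = esd_mat n (esd n a b u) (esd n a b v) * esd_mat n a b"
proof (rule mat_eq_vec)
  have a: "a \<in> VV n" and b: "b \<in> VV n" using g unfolding Good_def by auto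
  fix x :: "'a vec" assume x: "x \<in> VV n"
  show "esd_mat n a b * esd_mat n u v *\<^sub>v x = esd_mat n (esd n a b u) (esd n a b v) * esd_mat n a b *\<^sub>v x"
    using u v x a b
    by (simp add: S_vec esd_conj[OF g u v x] assoc_mult_mat_vec[of _ "NN n" "NN n" _ "NN n" x])
qed auto

lemma S_swap:
  assumes u: "(u::'a vec) \<in> VV n" and v: "v \<in> VV n" and qu: "qform n u = 0" and qv: "qform n v = 0"
  shows "esd_mat n u v = esd_mat n v (- u)"
  by (rule mat_eq_vec[of _ "NN n"]) (use u v in \<open>auto simp: S_vec esd_swap[OF u v qu qv]\<close>)

lemma S_smult:
  assumes u: "(u::'a vec) \<in> VV n" and v: "v \<in> VV n"
  shows "esd_mat n (c \<cdot>\<^sub>v u) v = esd_mat n u (c \<cdot>\<^sub>v v)"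
  by (rule mat_eq_vec[of _ "NN n"]) (use u v in \<open>auto simp: S_vec esd_smult_first[OF u v]\<close>)

lemma S_add_u:
  assumes g: "Good u v"
  shows "esd_mat n u (v + c \<cdot>\<^sub>v u) = esd_mat n u v"
proof -
  have u: "u \<in> VV n" and v: "v \<in> VV n" using g unfolding Good_def by auto
  show ?thesis
    by (rule mat_eq_vec[of _ "NN n"]) (use u v in \<open>auto simp: S_vec esd_add_u[OF g]\<close>)
qed

lemma S_zero:
  assumes u: "(u::'a vec) \<in> VV n"
  shows "esd_mat n u (0\<^sub>v (NN n)) = 1\<^sub>m (NN n)"
  by (rule mat_eq_vec[of _ "NN n"]) (use u in \<open>auto simp: S_vec esd_zero[OF u]\<close>)

end



lemma munit_carrier[simp]: "munit N a b \<in> carrier_mat N N"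
  unfolding munit_def by auto

lemma munit_idx[simp]: "r < N \<Longrightarrow> c < N \<Longrightarrow> munit N a b $$ (r,c) = (if r = a \<and> c = b then 1 else 0)"
  unfolding munit_def by auto

lemma F1_carrier: "F1 N i l \<in> carrier_mat N N"
  unfolding F1_def by (intro add_carrier_mat smult_carrier_mat minus_carrier_mat munit_carrier)
lemma F2_carrier: "F2 N i l \<in> carrier_mat N N"
  unfolding F2_def by (intro add_carrier_mat smult_carrier_mat minus_carrier_mat munit_carrier)

lemma gens_carrier: "G \<in> EO_gens n \<Longrightarrow> G \<in> carrier_mat (NN n) (NN n)"
  unfolding EO_gens_def NN_def using F1_carrier F2_carrier by blast

lemma EO_carrier: "A \<in> EO n \<Longrightarrow> A \<in> carrier_mat (NN n) (NN n)"
  by (induction rule: EO.induct) (auto simp: NN_def dest: gens_carrier)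

lemma gens_EO: "G \<in> EO_gens n \<Longrightarrow> G \<in> EO n"
  using EO_gen[OF EO_one, of G n] gens_carrier[of G n] by (simp add: NN_def)

lemma EO_mult: "B \<in> EO n \<Longrightarrow> A \<in> EO n \<Longrightarrow> A * B \<in> EO n"
proof (induction B rule: EO.induct)
  case EO_one
  then show ?case using EO_carrier[of A n] by (simp add: NN_def)
next
  case (EO_gen B G)
  have "A * (B * G) = (A * B) * G"
    using EO_carrier[OF EO_gen.prems] EO_carrier[OF EO_gen.hyps(1)] gens_carrier[OF EO_gen.hyps(2)]
    by (simp add: assoc_mult_mat[of _ "NN n" "NN n" _ "NN n" _ "NN n"])
  then show ?case using EO.EO_gen[OF EO_gen.IH[OF EO_gen.prems] EO_gen.hyps(2)] by simp
next
  case (EO_inv B G C)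
  have "A * (B * C) = (A * B) * C"
    using EO_carrier[OF EO_inv.prems] EO_carrier[OF EO_inv.hyps(1)] EO_inv.hyps(3)
    by (simp add: assoc_mult_mat[of _ "NN n" "NN n" _ "NN n" _ "NN n"] NN_def)
  then show ?case using EO.EO_inv[OF EO_inv.IH[OF EO_inv.prems] EO_inv.hyps(2-5)] by simp
qed

lemma EO_one': "1\<^sub>m (NN n) \<in> EO n"
  using EO_one by (simp add: NN_def)




lemma munit_dims[simp]: "dim_row (munit N a b) = N" "dim_col (munit N a b) = N"
  unfolding munit_def by auto

lemma dual_odd: "1 \<le> i \<Longrightarrow> dual (2*i-1) = 2*i"
  unfolding dual_def by auto
lemma dual_odd': "1 \<le> i \<Longrightarrow> dual (2*i - Suc 0) = 2*i"
  unfolding dual_def by auto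
lemma dual_even: "1 \<le> i \<Longrightarrow> dual (2*i) = 2*i-1"
  unfolding dual_def by auto
lemma dual_zero[simp]: "dual 0 = 0" unfolding dual_def by auto
lemma dual_eq0[simp]: "dual k = 0 \<longleftrightarrow> k = 0" unfolding dual_def by auto
lemma dual_neq: "k \<noteq> 0 \<Longrightarrow> dual k \<noteq> k" unfolding dual_def by auto
lemma wt0[simp]: "wt 0 = 2" unfolding wt_def by auto
lemma wtS[simp]: "k \<noteq> 0 \<Longrightarrow> wt k = 1" unfolding wt_def by auto

context hc begin

abbreviation ee :: "nat \<Rightarrow> 'a vec" where "ee k \<equiv> unit_vec (NN n) k"

lemma Q_e: "k < NN n \<Longrightarrow> k \<noteq> 0 \<Longrightarrow> qform n (ee k) = 0"
  unfolding Q_h using bf_unit_left[of k n "ee k"] dual_neq[of k] by simp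

lemma Q_e0: "qform n (ee 0) = 1"
  unfolding Q_h using bf_unit_left[of 0 n "ee 0"] two_h by (simp add: NN_def mult.commute)

lemma NN_pos[simp]: "0 < NN n" unfolding NN_def by simp

lemma F1_S:
  assumes i: "1 \<le> i" "i \<le> n"
  shows "F1 (NN n) i l = esd_mat n (ee (2*i-1)) ((-l) \<cdot>\<^sub>v ee 0)"
proof (rule eq_matI)
  fix r c assume r: "r < dim_row (esd_mat n (ee (2*i-1)) ((-l) \<cdot>\<^sub>v ee 0))"
    and c: "c < dim_col (esd_mat n (ee (2*i-1)) ((-l) \<cdot>\<^sub>v ee 0))"
  then have r: "r < NN n" and c: "c < NN n" by auto
  have lt: "2*i-1 < NN n" "2*i < NN n" using i unfolding NN_def by auto
  have Qv: "qform n ((-l) \<cdot>\<^sub>v ee 0) = l^2" by (simp add: Q_smult Q_e0)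
  have "esd_mat n (ee (2*i-1)) ((-l) \<cdot>\<^sub>v ee 0) $$ (r,c) = esd n (ee (2*i-1)) ((-l) \<cdot>\<^sub>v ee 0) (ee c) $ r"
    unfolding esd_mat_def using r c by (simp add: NN_def)
  also have "\<dots> = (if r = c then 1 else 0) + (if c = 0 then -2*l else 0) * (if r = 2*i-1 then 1 else 0)
     - (if c = 2*i then 1 else 0) * (if r = 0 then -l else 0) - l^2 * (if c = 2*i then 1 else 0) * (if r = 2*i-1 then 1 else 0)"
    using r c lt i
    by (simp add: esd_idx Qv bf_unit_right dual_eq_iff dual_odd dual_odd' dual_even)
  finally have E: "esd_mat n (ee (2*i-1)) ((-l) \<cdot>\<^sub>v ee 0) $$ (r,c) = \<dots>" .
  show "F1 (NN n) i l $$ (r,c) = esd_mat n (ee (2*i-1)) ((-l) \<cdot>\<^sub>v ee 0) $$ (r,c)"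
    unfolding E F1_def using r c i
    by (auto simp: munit_carrier[THEN carrier_matD(1)] munit_carrier[THEN carrier_matD(2)] power2_eq_square)
qed (auto simp: F1_def NN_def)

lemma F2_S:
  assumes i: "1 \<le> i" "i \<le> n"
  shows "F2 (NN n) i l = esd_mat n (ee (2*i)) ((-l) \<cdot>\<^sub>v ee 0)"
proof (rule eq_matI)
  fix r c assume r: "r < dim_row (esd_mat n (ee (2*i)) ((-l) \<cdot>\<^sub>v ee 0))"
    and c: "c < dim_col (esd_mat n (ee (2*i)) ((-l) \<cdot>\<^sub>v ee 0))"
  then have r: "r < NN n" and c: "c < NN n" by auto
  have lt: "2*i-1 < NN n" "2*i < NN n" using i unfolding NN_def by auto
  have Qv: "qform n ((-l) \<cdot>\<^sub>v ee 0) = l^2" by (simp add: Q_smult Q_e0)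
  have "esd_mat n (ee (2*i)) ((-l) \<cdot>\<^sub>v ee 0) $$ (r,c) = esd n (ee (2*i)) ((-l) \<cdot>\<^sub>v ee 0) (ee c) $ r"
    unfolding esd_mat_def using r c by (simp add: NN_def)
  also have "\<dots> = (if r = c then 1 else 0) + (if c = 0 then -2*l else 0) * (if r = 2*i then 1 else 0)
     - (if c = 2*i-1 then 1 else 0) * (if r = 0 then -l else 0) - l^2 * (if c = 2*i-1 then 1 else 0) * (if r = 2*i then 1 else 0)"
    using r c lt i
    by (simp add: esd_idx Qv bf_unit_right dual_eq_iff dual_odd dual_odd' dual_even)
  finally have E: "esd_mat n (ee (2*i)) ((-l) \<cdot>\<^sub>v ee 0) $$ (r,c) = \<dots>" .
  show "F2 (NN n) i l $$ (r,c) = esd_mat n (ee (2*i)) ((-l) \<cdot>\<^sub>v ee 0) $$ (r,c)"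
    unfolding E F2_def using r c i
    by (auto simp: power2_eq_square)
qed (auto simp: F2_def NN_def)

lemma gensS:
  assumes k: "k < NN n" "k \<noteq> 0"
  shows "esd_mat n (ee k) (c \<cdot>\<^sub>v ee 0) \<in> EO n"
proof (cases "odd k")
  case True
  define i where "i = (k+1) div 2"
  have ki: "k = 2*i-1" "1 \<le> i" using True unfolding i_def by (auto elim!: oddE)
  have "i \<le> n" using k ki unfolding NN_def by auto
  then have "F1 (2*n+1) i (-c) \<in> EO_gens n" using ki unfolding EO_gens_def by auto
  then have "F1 (NN n) i (-c) \<in> EO n" using gens_EO unfolding NN_def by blast
  then show ?thesis using F1_S[OF ki(2) \<open>i \<le> n\<close>, of "-c"] ki by simp
next
  case False
  define i where "i = k div 2"
  have ki: "k = 2*i" "1 \<le> i" using False k unfolding i_def by (auto elim!: evenE)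
  have "i \<le> n" using k ki unfolding NN_def by auto
  then have "F2 (2*n+1) i (-c) \<in> EO_gens n" using ki unfolding EO_gens_def by auto
  then have "F2 (NN n) i (-c) \<in> EO n" using gens_EO unfolding NN_def by blast
  then show ?thesis using F2_S[OF ki(2) \<open>i \<le> n\<close>, of "-c"] ki by simp
qed

lemma Good_e:
  assumes k: "k < NN n" "k \<noteq> 0" and x: "x \<in> VV n" and xk: "x $ dual k = 0"
  shows "Good (ee k) x"
  unfolding Good_def using k x xk by (simp add: Q_e bf_unit_left)

lemma vec_neg_cancel: "(v::'a vec) \<in> VV n \<Longrightarrow> v + - v = 0\<^sub>v (NN n)"
  by (intro eq_vecI) auto

lemma S_inv:
  assumes g: "Good u v"
  shows "esd_mat n u v * esd_mat n u (- v) = 1\<^sub>m (NN n)" "esd_mat n u (- v) * esd_mat n u v = 1\<^sub>m (NN n)"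
proof -
  have u: "u \<in> VV n" and v: "v \<in> VV n" using g unfolding Good_def by auto
  have g': "Good u (- v)" using g unfolding Good_def by (auto simp: bf_lin)
  have e: "- v + v = 0\<^sub>v (NN n)" using v by (intro eq_vecI) auto
  show "esd_mat n u v * esd_mat n u (- v) = 1\<^sub>m (NN n)"
    using S_comp[OF g g'] vec_neg_cancel[OF v] S_zero[OF u] by simp
  show "esd_mat n u (- v) * esd_mat n u v = 1\<^sub>m (NN n)"
    using S_comp[OF g' g] e S_zero[OF u] by simp
qed

lemma conj_in:
  assumes g: "Good a b" and g1: "esd_mat n a b \<in> EO n" and g2: "esd_mat n a (- b) \<in> EO n"
    and u: "u \<in> VV n" and v: "v \<in> VV n" and X: "esd_mat n u v \<in> EO n"
  shows "esd_mat n (esd n a b u) (esd n a b v) \<in> EO n"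
proof -
  let ?g = "esd_mat n a b" and ?g' = "esd_mat n a (- b)" and ?X = "esd_mat n u v"
    and ?Y = "esd_mat n (esd n a b u) (esd n a b v)"
  have c: "?g \<in> carrier_mat (NN n) (NN n)" "?g' \<in> carrier_mat (NN n) (NN n)"
     "?X \<in> carrier_mat (NN n) (NN n)" "?Y \<in> carrier_mat (NN n) (NN n)" by auto
  have "?Y = ?Y * (?g * ?g')" using S_inv(1)[OF g] by simp
  also have "\<dots> = (?Y * ?g) * ?g'" using c by (simp add: assoc_mult_mat[of _ "NN n" "NN n" _ "NN n" _ "NN n"])
  also have "?Y * ?g = ?g * ?X" using S_conj[OF g u v] by simp
  finally have "?Y = ?g * ?X * ?g'" .
  then show ?thesis using EO_mult[OF X g1] EO_mult[OF g2] by metis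
qed

lemma smult_neg: "(v::'a vec) \<in> VV n \<Longrightarrow> - (c \<cdot>\<^sub>v v) = (-c) \<cdot>\<^sub>v v"
  by (intro eq_vecI) auto

lemma E2:
  assumes k: "k < NN n" "k \<noteq> 0" and m: "m < NN n" "m \<noteq> 0" "m \<noteq> k" "m \<noteq> dual k"
  shows "esd_mat n (ee k) (c \<cdot>\<^sub>v ee m) \<in> EO n"
proof -
  have dk: "dual k < NN n" "dual m < NN n" using k m by auto
  have km: "k \<noteq> dual m" using m by (metis dual_dual)
  have gm: "Good (ee m) (h \<cdot>\<^sub>v ee 0)" by (rule Good_e) (use m in auto)
  have g1: "esd_mat n (ee m) (h \<cdot>\<^sub>v ee 0) \<in> EO n" by (rule gensS) (use m in auto)
  have g2: "esd_mat n (ee m) (- (h \<cdot>\<^sub>v ee 0)) \<in> EO n" unfolding smult_neg[OF unit_vec_carrier]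
    by (rule gensS) (use m in auto)
  have X: "esd_mat n (ee k) (c \<cdot>\<^sub>v ee 0) \<in> EO n" by (rule gensS) (use k in auto)
  have Y: "esd_mat n (esd n (ee m) (h \<cdot>\<^sub>v ee 0) (ee k)) (esd n (ee m) (h \<cdot>\<^sub>v ee 0) (c \<cdot>\<^sub>v ee 0)) \<in> EO n"
    by (rule conj_in[OF gm g1 g2 _ _ X]) auto
  have e1: "esd n (ee m) (h \<cdot>\<^sub>v ee 0) (ee k) = ee k"
    using k m dk km by (intro eq_vecI) (auto simp: esd_idx bf_lin bf_unit_left bf_unit_right)
  have e2: "esd n (ee m) (h \<cdot>\<^sub>v ee 0) (c \<cdot>\<^sub>v ee 0) = c \<cdot>\<^sub>v ee 0 + c \<cdot>\<^sub>v ee m"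
    using k m dk km by (intro eq_vecI) (auto simp: esd_idx bf_lin bf_unit_left bf_unit_right two_h)
  have Y': "esd_mat n (ee k) (c \<cdot>\<^sub>v ee 0 + c \<cdot>\<^sub>v ee m) \<in> EO n" using Y unfolding e1 e2 .
  have Z: "esd_mat n (ee k) ((-c) \<cdot>\<^sub>v ee 0) \<in> EO n" by (rule gensS) (use k in auto)
  have ga: "Good (ee k) ((-c) \<cdot>\<^sub>v ee 0)" by (rule Good_e) (use k in auto)
  have gb: "Good (ee k) (c \<cdot>\<^sub>v ee 0 + c \<cdot>\<^sub>v ee m)" by (rule Good_e) (use k m dk km in auto)
  have e3: "(-c) \<cdot>\<^sub>v ee 0 + (c \<cdot>\<^sub>v ee 0 + c \<cdot>\<^sub>v ee m) = c \<cdot>\<^sub>v ee m"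
    by (intro eq_vecI) auto
  show ?thesis using EO_mult[OF Y' Z] S_comp[OF ga gb] e3 by simp
qed

end



context hc begin

lemma Q_diff: "(x::'a vec) \<in> VV n \<Longrightarrow> y \<in> VV n \<Longrightarrow> qform n (x - y) = qform n x + qform n y - bf n x y"
proof -
  assume xy: "x \<in> VV n" "y \<in> VV n"
  have e: "x - y = x + - y" using xy by (intro eq_vecI) auto
  show ?thesis unfolding e using xy by (simp add: Q_add Q_uminus bf_lin)
qed

lemma sum_closed:
  assumes K: "finite K" and u: "(u::'a vec) \<in> VV n" and qu: "qform n u = 0"
    and f: "\<And>k. k \<in> K \<Longrightarrow> f k \<in> VV n \<and> Good u (f k) \<and> esd_mat n u (f k) \<in> EO n"
  shows "Good u (vec (NN n) (\<lambda>i. \<Sum>k\<in>K. f k $ i)) \<and> esd_mat n u (vec (NN n) (\<lambda>i. \<Sum>k\<in>K. f k $ i)) \<in> EO n"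
  using K f
proof (induction K rule: finite_induct)
  case empty
  have e: "vec (NN n) (\<lambda>i. \<Sum>k\<in>{}. f k $ i) = 0\<^sub>v (NN n)" by (intro eq_vecI) auto
  show ?case unfolding e using u qu S_zero[OF u] EO_one' by (simp add: Good_def bf_lin)
next
  case (insert k F)
  let ?s = "vec (NN n) (\<lambda>i. \<Sum>k\<in>F. f k $ i)"
  have IH: "Good u ?s \<and> esd_mat n u ?s \<in> EO n" using insert by auto
  have fk: "f k \<in> VV n" "Good u (f k)" "esd_mat n u (f k) \<in> EO n" using insert by auto
  have e: "vec (NN n) (\<lambda>i. \<Sum>k\<in>insert k F. f k $ i) = f k + ?s"
    using insert fk by (intro eq_vecI) auto
  have g: "Good u (f k + ?s)" using IH fk unfolding Good_def by (auto simp: bf_lin)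
  have m: "esd_mat n u (f k) * esd_mat n u ?s \<in> EO n" using EO_mult IH fk by blast
  have "esd_mat n u (f k) * esd_mat n u ?s = esd_mat n u (f k + ?s)" using S_comp fk(2) IH by blast
  then show ?case unfolding e using g m by simp
qed

lemma vec_decomp: "(x::'a vec) \<in> VV n \<Longrightarrow> vec (NN n) (\<lambda>i. \<Sum>j\<in>{0..<NN n}. ((x $ j) \<cdot>\<^sub>v ee j) $ i) = x"
  by (intro eq_vecI) (auto simp: sum.delta if_distrib[of "\<lambda>t. _ * t"] cong: if_cong)

lemma E3:
  assumes k: "k < NN n" "k \<noteq> 0" and x: "x \<in> VV n" and xk: "x $ dual k = 0"
  shows "esd_mat n (ee k) x \<in> EO n"
proof -
  have dk: "dual k < NN n" "dual k \<noteq> 0" using k by auto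
  have "Good (ee k) (vec (NN n) (\<lambda>i. \<Sum>j\<in>{0..<NN n}. ((x $ j) \<cdot>\<^sub>v ee j) $ i)) \<and>
        esd_mat n (ee k) (vec (NN n) (\<lambda>i. \<Sum>j\<in>{0..<NN n}. ((x $ j) \<cdot>\<^sub>v ee j) $ i)) \<in> EO n"
  proof (rule sum_closed)
    show "qform n (ee k) = 0" using Q_e k by auto
    fix j assume "j \<in> {0..<NN n}"
    then have j: "j < NN n" by auto
    have g: "Good (ee k) ((x $ j) \<cdot>\<^sub>v ee j)"
      by (rule Good_e) (use k j dk xk in auto)
    have "esd_mat n (ee k) ((x $ j) \<cdot>\<^sub>v ee j) \<in> EO n"
    proof (cases "j = 0")
      case True then show ?thesis using gensS k by simp
    next
      case j0: False
      show ?thesis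
      proof (cases "j = k")
        case True
        have g0: "Good (ee k) (0\<^sub>v (NN n))" by (rule Good_e) (use k dk in auto)
        have "esd_mat n (ee k) ((x $ j) \<cdot>\<^sub>v ee j) = esd_mat n (ee k) (0\<^sub>v (NN n) + (x $ j) \<cdot>\<^sub>v ee k)"
          using True by (metis left_zero_vec smult_carrier_vec unit_vec_carrier)
        also have "\<dots> = 1\<^sub>m (NN n)" using S_add_u[OF g0] S_zero k by simp
        finally show ?thesis using EO_one' by simp
      next
        case jk: False
        show ?thesis
        proof (cases "j = dual k")
          case True
          have "(x $ j) \<cdot>\<^sub>v ee j = 0\<^sub>v (NN n)" using True xk by (intro eq_vecI) auto
          then show ?thesis using S_zero EO_one' by simp
        next
          case False
          then show ?thesis using E2[OF k j j0 jk] by simp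
        qed
      qed
    qed
    then show "(x $ j) \<cdot>\<^sub>v ee j \<in> VV n \<and> Good (ee k) ((x $ j) \<cdot>\<^sub>v ee j) \<and>
        esd_mat n (ee k) ((x $ j) \<cdot>\<^sub>v ee j) \<in> EO n" using g by simp
  qed (auto)
  then show ?thesis using vec_decomp[OF x] by simp
qed

lemma E4:
  assumes z: "(z::'a vec) \<in> VV n" and w: "w \<in> VV n" and qz: "qform n z = 0" and qw: "qform n w = 0"
    and zw: "bf n z w = 0" and r: "r < NN n" "r \<noteq> 0"
    and zr: "z $ r = 0" "z $ dual r = 0" and wr: "w $ r = 0" "w $ dual r = 0"
  shows "esd_mat n w z \<in> EO n"
proof -
  define r' where "r' = dual r"
  have r': "r' < NN n" "r' \<noteq> 0" "dual r' = r" using r unfolding r'_def by auto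
  have g: "Good (ee r) z" by (rule Good_e) (use r z zr in auto)
  have g1: "esd_mat n (ee r) z \<in> EO n" by (rule E3) (use r z zr in auto)
  have g2: "esd_mat n (ee r) (- z) \<in> EO n" by (rule E3) (use r z zr in auto)
  have X: "esd_mat n (ee r') w \<in> EO n" by (rule E3) (use r' w wr in auto)
  have Y: "esd_mat n (esd n (ee r) z (ee r')) (esd n (ee r) z w) \<in> EO n"
    by (rule conj_in[OF g g1 g2 _ _ X]) (use w in auto)
  have e1: "esd n (ee r) z (ee r') = ee r' - z"
    using r r' z zr qz by (intro eq_vecI) (auto simp: esd_idx bf_unit_left bf_unit_right r'_def)
  have e2: "esd n (ee r) z w = w"
    using r r' z w zr wr zw by (intro eq_vecI) (auto simp: esd_idx bf_unit_left bf_unit_right bf_sym[of n z w])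
  have Y': "esd_mat n (ee r' - z) w \<in> EO n" using Y unfolding e1 e2 .
  have q1: "qform n (ee r' - z) = 0" using r' z zr qz by (simp add: Q_diff Q_e bf_unit_left)
  have sw1: "esd_mat n (ee r' - z) w = esd_mat n w (- (ee r' - z))"
    by (rule S_swap) (use z w q1 qw in auto)
  have sw2: "esd_mat n w (ee r') = esd_mat n (ee r') (- w)"
    by (rule S_swap) (use w r' qw Q_e in auto)
  have W: "esd_mat n w (ee r') \<in> EO n" unfolding sw2 by (rule E3) (use r' w wr in auto)
  have ga: "Good w (ee r')" unfolding Good_def using w r' qw wr by (simp add: bf_unit_right)
  have gb: "Good w (- (ee r' - z))" unfolding Good_def using w r' qw wr z zw
    by (simp add: bf_lin bf_unit_right bf_sym[of n w z])
  have e3: "ee r' + - (ee r' - z) = z" using z by (intro eq_vecI) auto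
  show ?thesis using EO_mult[OF Y'[unfolded sw1] W] S_comp[OF ga gb] e3 by simp
qed

end



lemma pair_dual: "(dual x + 1) div 2 = (x + 1) div (2::nat)"
  unfolding dual_def by (auto elim!: oddE evenE)

lemma free_pair:
  assumes n: "n \<ge> 3"
  shows "\<exists>r. r < NN n \<and> r \<noteq> 0 \<and> r \<noteq> a \<and> r \<noteq> b \<and> r \<noteq> dual a \<and> r \<noteq> dual b \<and> dual r \<noteq> a \<and> dual r \<noteq> b"
proof -
  define p where "p x = (x + 1) div (2::nat)" for x
  obtain t where t: "t \<in> {1,2,3}" "t \<noteq> p a" "t \<noteq> p b"
    by (metis insertCI numeral_One numeral_eq_iff semiring_norm(86) semiring_norm(89)
          Suc_1 n_not_Suc_n numeral_3_eq_3)
  define r where "r = 2*t - 1"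
  have pr: "p r = t" "p (dual r) = t" unfolding r_def p_def pair_dual[of "2*t-1", folded p_def] using t(1) by (auto simp: dual_def)
  have pd: "p (dual x) = p x" for x unfolding p_def by (rule pair_dual)
  have "r < NN n" "r \<noteq> 0" "dual r = 2*t" using t(1) n unfolding r_def NN_def dual_def by auto
  moreover have "r \<noteq> a" "r \<noteq> b" "r \<noteq> dual a" "r \<noteq> dual b" "dual r \<noteq> a" "dual r \<noteq> b"
    using pr pd t by metis+
  ultimately show ?thesis by blast
qed

context hc begin

definition zz :: "'a vec \<Rightarrow> nat \<Rightarrow> nat \<Rightarrow> 'a vec" where
  "zz u a b = (u $ dual b) \<cdot>\<^sub>v ee a - (u $ dual a) \<cdot>\<^sub>v ee b"

lemma zz_carrier[simp]: "zz u a b \<in> VV n" unfolding zz_def by simp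

lemma zz_dim[simp]: "dim_vec (zz u a b) = NN n" unfolding zz_def by simp

lemma zz_idx: "i < NN n \<Longrightarrow> a < NN n \<Longrightarrow> b < NN n \<Longrightarrow>
  zz u a b $ i = (if i = a then u $ dual b else 0) - (if i = b then u $ dual a else 0)"
  unfolding zz_def by auto

lemma M1:
  assumes n3: "n \<ge> 3" and u: "u \<in> VV n" and qu: "qform n u = 0" and u0: "u $ 0 = 0"
    and a: "a < NN n" "a \<noteq> 0" and b: "b < NN n" "b \<noteq> 0" "b \<noteq> a" "b \<noteq> dual a"
  shows "Good u (c \<cdot>\<^sub>v zz u a b) \<and> esd_mat n u (c \<cdot>\<^sub>v zz u a b) \<in> EO n"
proof -
  let ?z = "c \<cdot>\<^sub>v zz u a b"
  have da: "dual a < NN n" "dual a \<noteq> 0" "dual b < NN n" "dual b \<noteq> 0" using a b by auto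
  have ab': "dual a \<noteq> dual b" "a \<noteq> dual b" using b by (metis dual_dual)+
  have z: "?z \<in> VV n" by simp
  have qz: "qform n ?z = 0"
    unfolding Q_h zz_def using a b da ab' dual_neq[of a] dual_neq[of b] by (simp add: bf_lin bf_unit_left)
  have uz: "bf n u ?z = 0"
    unfolding zz_def using a b u by (simp add: bf_lin bf_unit_right algebra_simps)
  have gz: "Good u ?z" unfolding Good_def using u qu uz by simp
  define u' where "u' = (u $ dual a) \<cdot>\<^sub>v ee (dual a) + (u $ dual b) \<cdot>\<^sub>v ee (dual b)"
  define u'' where "u'' = u - u'"
  have u'c: "u' \<in> VV n" "u'' \<in> VV n" unfolding u'_def u''_def using u by auto
  have u'idx: "i < NN n \<Longrightarrow> u' $ i = (if i = dual a then u $ dual a else 0) + (if i = dual b then u $ dual b else 0)" for i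
    unfolding u'_def using da by auto
  have u''idx: "i < NN n \<Longrightarrow> (- u'') $ i = (if i = dual a \<or> i = dual b \<or> i = 0 then 0 else - u $ i)" for i
    unfolding u''_def using u'c u u'idx[of i] ab' u0 da by auto
  have zu': "bf n ?z u' = 0"
    unfolding zz_def u'_def using a b da ab' by (simp add: bf_lin bf_unit_left algebra_simps)
  have zu'': "bf n ?z u'' = 0"
    unfolding u''_def using u'c u z zu' uz by (simp add: bf_lin bf_sym[of n ?z u])
  have sw: "esd_mat n u ?z = esd_mat n ?z (- u)" by (rule S_swap) (use u qu qz in auto)
  have e: "- u'' + - u' = - u" unfolding u''_def using u'c u by (intro eq_vecI) auto
  have g1: "Good ?z (- u'')" unfolding Good_def using qz u'c zu'' by (simp add: bf_lin)
  have g2: "Good ?z (- u')" unfolding Good_def using qz u'c zu' by (simp add: bf_lin)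
  have split: "esd_mat n ?z (- u) = esd_mat n ?z (- u'') * esd_mat n ?z (- u')"
    using S_comp[OF g1 g2] e by simp
  obtain r where r: "r < NN n" "r \<noteq> 0" "r \<noteq> a" "r \<noteq> b" "r \<noteq> dual a" "r \<noteq> dual b" "dual r \<noteq> a" "dual r \<noteq> b"
    using free_pair[OF n3] by blast
  have dr: "dual r < NN n" using r by simp
  have qu': "qform n (- u') = 0"
    unfolding u'_def using a da ab' by (simp add: Q_uminus Q_add Q_smult Q_e bf_lin bf_unit_left)
  have P2: "esd_mat n ?z (- u') \<in> EO n"
  proof (rule E4)
    show "bf n (- u') ?z = 0" using u'c zu' by (simp add: bf_lin bf_sym[of n u' "zz u a b"])
    show "(- u') $ r = 0" "(- u') $ dual r = 0" using r dr u'c u'idx by (auto simp: dual_eq_iff)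
    show "?z $ r = 0" "?z $ dual r = 0" using r dr a b by (auto simp: zz_idx)
  qed (use u'c qz qu' r in auto)
  have P1: "Good ?z (vec (NN n) (\<lambda>i. \<Sum>j\<in>{0..<NN n}. (((- u'') $ j) \<cdot>\<^sub>v ee j) $ i)) \<and>
        esd_mat n ?z (vec (NN n) (\<lambda>i. \<Sum>j\<in>{0..<NN n}. (((- u'') $ j) \<cdot>\<^sub>v ee j) $ i)) \<in> EO n"
  proof (rule sum_closed)
    fix j assume "j \<in> {0..<NN n}"
    then have j: "j < NN n" by auto
    show "((- u'') $ j) \<cdot>\<^sub>v ee j \<in> VV n \<and> Good ?z (((- u'') $ j) \<cdot>\<^sub>v ee j) \<and>
        esd_mat n ?z (((- u'') $ j) \<cdot>\<^sub>v ee j) \<in> EO n"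
    proof (cases "j = dual a \<or> j = dual b \<or> j = 0")
      case True
      then have "((- u'') $ j) \<cdot>\<^sub>v ee j = 0\<^sub>v (NN n)" using u''idx[OF j] by (intro eq_vecI) auto
      then show ?thesis using S_zero[OF z] EO_one' qz unfolding Good_def by (simp add: bf_lin)
    next
      case False
      then have j0: "j \<noteq> 0" and dj: "dual j \<noteq> a" "dual j \<noteq> b" by (auto simp: dual_eq_iff)
      have zdj: "?z $ dual j = 0" using j dj a b by (simp add: zz_idx)
      let ?al = "(- u'') $ j"
      have g: "Good ?z (?al \<cdot>\<^sub>v ee j)" unfolding Good_def using qz j zdj
        by (simp add: bf_lin bf_unit_right)
      have "esd_mat n ?z (?al \<cdot>\<^sub>v ee j) = esd_mat n (?al \<cdot>\<^sub>v ee j) (- ?z)"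
        by (rule S_swap) (use qz j j0 in \<open>auto simp: Q_smult Q_e\<close>)
      also have "\<dots> = esd_mat n (ee j) (?al \<cdot>\<^sub>v (- ?z))" by (rule S_smult) (use j in auto)
      finally have e: "esd_mat n ?z (?al \<cdot>\<^sub>v ee j) = esd_mat n (ee j) (?al \<cdot>\<^sub>v (- ?z))" .
      have "esd_mat n (ee j) (?al \<cdot>\<^sub>v (- ?z)) \<in> EO n"
        by (rule E3) (use j j0 zdj in auto)
      then show ?thesis using g e by simp
    qed
  qed (use z qz in auto)
  have P1': "esd_mat n ?z (- u'') \<in> EO n" using P1 vec_decomp[of "- u''"] u'c by simp
  show ?thesis using gz sw split EO_mult[OF P2 P1'] by simp
qed

end



lemma dual_pos[simp]: "0 < dual k \<longleftrightarrow> 0 < k" unfolding dual_def by auto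

context hc begin

lemma M3:
  assumes n3: "n \<ge> 3" and u: "u \<in> VV n" and qu: "qform n u = 0" and u0: "u $ 0 = 0"
    and w: "w \<in> VV n" and uw: "(\<Sum>k<NN n. u $ k * w $ k) = 1"
    and a: "a < NN n" "a \<noteq> 0"
  shows "Good u (c \<cdot>\<^sub>v zz u a (dual a)) \<and> esd_mat n u (c \<cdot>\<^sub>v zz u a (dual a)) \<in> EO n"
proof -
  define a' where "a' = dual a"
  have a': "a' < NN n" "a' \<noteq> 0" "a' \<noteq> a" "dual a' = a" using a dual_neq[of a] unfolding a'_def by auto
  define D where "D = {d. d < NN n \<and> d \<noteq> 0 \<and> d \<noteq> a \<and> d \<noteq> a'}"
  have Dfin: "finite D" unfolding D_def by auto
  have Dsplit: "{..<NN n} = insert 0 (insert a (insert a' D))" unfolding D_def using a a' by auto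
  have Dnot: "0 \<notin> D" "a \<notin> D" "a' \<notin> D" unfolding D_def by auto
  have Dne: "d \<noteq> a" "d \<noteq> a'" "d \<noteq> 0" "a \<noteq> d" "a' \<noteq> d" if "d \<in> D" for d using that unfolding D_def by auto
  have Ddual: "d \<in> D \<Longrightarrow> dual d \<in> D" for d unfolding D_def using a' by (auto simp: dual_eq_iff)
  have sumD: "(\<Sum>k<NN n. f k) = f 0 + f a + f a' + (\<Sum>d\<in>D. f d)" for f :: "nat \<Rightarrow> 'a"
    unfolding Dsplit using Dfin Dnot a a' by (simp add: add.assoc)
  have reD: "(\<Sum>d\<in>D. f (dual d)) = (\<Sum>d\<in>D. f d)" for f :: "nat \<Rightarrow> 'a"
    by (rule sum.reindex_bij_witness[of _ dual dual]) (auto simp: Ddual)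
  have S1: "(\<Sum>d\<in>D. w $ dual d * u $ dual d) = 1 - w $ a * u $ a - w $ a' * u $ a'"
    using uw unfolding sumD reD[of "\<lambda>d. w $ d * u $ d"] by (simp add: u0 algebra_simps)
  have S2: "(\<Sum>d\<in>D. u $ d * u $ dual d) = - 2 * u $ a * u $ a'"
  proof -
    have "bf n u u = 0" using bf_uu[OF qu] .
    moreover have e: "(\<Sum>d\<in>D. u $ d * wt d * u $ dual d) = (\<Sum>d\<in>D. u $ d * u $ dual d)"
      by (rule sum.cong) (use Dnot in \<open>auto simp: wt_def\<close>)
    ultimately have "u $ a * u $ a' + u $ a' * u $ a + (\<Sum>d\<in>D. u $ d * u $ dual d) = 0"
      unfolding bf_def sumD e using a a' a'_def by (simp add: u0)
    then show ?thesis by (simp add: algebra_simps eq_neg_iff_add_eq_0[symmetric] mult_2)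
  qed
  define al where "al d = - c * w $ dual d * u $ a' + c * w $ a * u $ d" for d
  define be where "be d = c * w $ dual d * u $ a - c * w $ a' * u $ d" for d
  define t where "t = c * (w $ a' * u $ a' - w $ a * u $ a)"
  define f where "f d = al d \<cdot>\<^sub>v zz u a' d + be d \<cdot>\<^sub>v zz u a d" for d
  have zzA: "zz u a a' = zz u a (dual a)" unfolding a'_def ..
  have gz: "Good u (c \<cdot>\<^sub>v zz u a a')"
    unfolding Good_def zz_def using u qu a a' by (simp add: bf_lin bf_unit_right algebra_simps)
  have fD: "f d \<in> VV n \<and> Good u (f d) \<and> esd_mat n u (f d) \<in> EO n" if d: "d \<in> D" for d
  proof -
    have d': "d < NN n" "d \<noteq> 0" "d \<noteq> a" "d \<noteq> a'" using d unfolding D_def by auto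
    have m1: "Good u (al d \<cdot>\<^sub>v zz u a' d) \<and> esd_mat n u (al d \<cdot>\<^sub>v zz u a' d) \<in> EO n"
      by (rule M1[OF n3 u qu u0 a'(1,2) d'(1,2)]) (use d' a' in auto)
    have m2: "Good u (be d \<cdot>\<^sub>v zz u a d) \<and> esd_mat n u (be d \<cdot>\<^sub>v zz u a d) \<in> EO n"
      by (rule M1[OF n3 u qu u0 a d'(1,2)]) (use d' a' a'_def in auto)
    have g: "Good u (f d)" using m1 m2 u unfolding Good_def f_def by (simp add: bf_lin)
    have "esd_mat n u (al d \<cdot>\<^sub>v zz u a' d) * esd_mat n u (be d \<cdot>\<^sub>v zz u a d) = esd_mat n u (f d)"
      unfolding f_def using S_comp m1 m2 by blast
    then show ?thesis using EO_mult[of "esd_mat n u (be d \<cdot>\<^sub>v zz u a d)" n "esd_mat n u (al d \<cdot>\<^sub>v zz u a' d)"]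
      m1 m2 g unfolding f_def by simp
  qed
  have sc: "Good u (vec (NN n) (\<lambda>i. \<Sum>d\<in>D. f d $ i)) \<and> esd_mat n u (vec (NN n) (\<lambda>i. \<Sum>d\<in>D. f d $ i)) \<in> EO n"
    by (rule sum_closed[OF Dfin u qu fD])
  have lin: "(\<Sum>d\<in>D. (x * g1 d - y * g2 d)) = x * (\<Sum>d\<in>D. g1 d) - y * (\<Sum>d\<in>D. g2 d)" for x y :: 'a and g1 g2
    by (simp add: sum_subtractf sum_distrib_left)
  have ident: "vec (NN n) (\<lambda>i. \<Sum>d\<in>D. f d $ i) = c \<cdot>\<^sub>v zz u a a' + t \<cdot>\<^sub>v u"
  proof (rule eq_vecI)
    fix i assume "i < dim_vec (c \<cdot>\<^sub>v zz u a a' + t \<cdot>\<^sub>v u)"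
    then have i: "i < NN n" using u by simp
    have fi: "f d $ i = al d * ((if i = a' then u $ dual d else 0) - (if i = d then u $ a else 0))
        + be d * ((if i = a then u $ dual d else 0) - (if i = d then u $ a' else 0))" if "d \<in> D" for d
      unfolding f_def using that i a a' unfolding D_def by (auto simp: zz_idx a'_def)
    have rhs: "(c \<cdot>\<^sub>v zz u a a' + t \<cdot>\<^sub>v u) $ i = c * ((if i = a then u $ a else 0) - (if i = a' then u $ a' else 0)) + t * u $ i"
      using i u a a' by (simp add: zz_idx a'_def)
    have "(\<Sum>d\<in>D. f d $ i) = c * ((if i = a then u $ a else 0) - (if i = a' then u $ a' else 0)) + t * u $ i"
    proof -
      consider "i = a" | "i = a'" | "i = 0" | "i \<in> D" using i unfolding D_def by auto
      then show ?thesis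
      proof cases
        case 1
        have "(\<Sum>d\<in>D. f d $ i) = (\<Sum>d\<in>D. (c * u $ a) * (w $ dual d * u $ dual d) - (c * w $ a') * (u $ d * u $ dual d))"
          apply (rule sum.cong[OF refl])
          subgoal for d using fi[of d] 1 a'(3) Dnot Dne[of d] by (auto simp: be_def algebra_simps)
          done
        also have "\<dots> = c * u $ a * (1 - w $ a * u $ a - w $ a' * u $ a') - c * w $ a' * (- 2 * u $ a * u $ a')"
          unfolding lin S1 S2 ..
        finally show ?thesis using 1 a' unfolding t_def by (simp add: algebra_simps)
      next
        case 2
        have "(\<Sum>d\<in>D. f d $ i) = (\<Sum>d\<in>D. (c * w $ a) * (u $ d * u $ dual d) - (c * u $ a') * (w $ dual d * u $ dual d))"
          apply (rule sum.cong[OF refl])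
          subgoal for d using fi[of d] 2 a'(3) Dnot Dne[of d] by (auto simp: al_def algebra_simps)
          done
        also have "\<dots> = c * w $ a * (- 2 * u $ a * u $ a') - c * u $ a' * (1 - w $ a * u $ a - w $ a' * u $ a')"
          unfolding lin S1 S2 ..
        finally show ?thesis using 2 a' unfolding t_def by (simp add: algebra_simps)
      next
        case 3
        have "(\<Sum>d\<in>D. f d $ i) = 0"
          apply (rule sum.neutral)
          using fi 3 a(2) a'(2) Dnot by auto
        then show ?thesis using 3 a a' u0 by simp
      next
        case 4
        have "(\<Sum>d\<in>D. f d $ i) = (\<Sum>d\<in>D. if d = i then - (al i * u $ a + be i * u $ a') else 0)"
          apply (rule sum.cong[OF refl])
          subgoal for d using fi[of d] 4 Dnot Dne[of d] by (auto simp: algebra_simps eq_neg_iff_add_eq_0)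
          done
        also have "\<dots> = - (al i * u $ a + be i * u $ a')" using 4 Dfin by simp
        finally show ?thesis using 4 Dnot unfolding al_def be_def t_def by (auto simp: algebra_simps)
      qed
    qed
    then show "vec (NN n) (\<lambda>i. \<Sum>d\<in>D. f d $ i) $ i = (c \<cdot>\<^sub>v zz u a a' + t \<cdot>\<^sub>v u) $ i"
      unfolding rhs using i by simp
  qed (use u in simp)
  have "esd_mat n u (c \<cdot>\<^sub>v zz u a a') = esd_mat n u (c \<cdot>\<^sub>v zz u a a' + t \<cdot>\<^sub>v u)"
    using S_add_u[OF gz] by simp
  then show ?thesis using sc gz unfolding ident zzA by simp
qed

end



context hc begin

lemma T:
  assumes n3: "n \<ge> 3" and u: "u \<in> VV n" and qu: "qform n u = 0" and u0: "u $ 0 = 0"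
    and w: "w \<in> VV n" and uw: "(\<Sum>k<NN n. u $ k * w $ k) = 1"
    and a: "a < NN n" "a \<noteq> 0" and b: "b < NN n" "b \<noteq> 0"
  shows "Good u (c \<cdot>\<^sub>v zz u a b) \<and> esd_mat n u (c \<cdot>\<^sub>v zz u a b) \<in> EO n"
proof (cases "b = a")
  case True
  have e: "c \<cdot>\<^sub>v zz u a b = 0\<^sub>v (NN n)" using True a by (intro eq_vecI) (auto simp: zz_idx)
  show ?thesis unfolding e using u qu S_zero[OF u] EO_one' by (simp add: Good_def bf_lin)
next
  case ba: False
  show ?thesis
  proof (cases "b = dual a")
    case True
    then show ?thesis using M3[OF n3 u qu u0 w uw a] by simp
  next
    case False
    then show ?thesis using M1[OF n3 u qu u0 a b ba] by simp
  qed
qed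

end

theorem mainTheorem7:
  fixes u v :: "'a::comm_ring_1 vec" and n :: nat
  assumes two_inv: "\<exists>h::'a. 2 * h = 1"
    and n3: "n \<ge> 3"
    and u_dim: "u \<in> carrier_vec (2*n+1)" and v_dim: "v \<in> carrier_vec (2*n+1)"
    and u0: "u $ 0 = 0" and v0: "v $ 0 = 0"
    and u_unimod: "unimodular (2*n+1) u"
    and u_iso: "qform n u = 0"
    and uv: "bform n u v = 0"
  shows "esd_mat n u v \<in> EO n"
proof -
  obtain h :: 'a where h: "2 * h = 1" using two_inv by blast
  interpret hc n h by unfold_locales (rule h)
  have N: "2*n+1 = NN n" by (simp add: NN_def)
  have u: "u \<in> VV n" and v: "v \<in> VV n" using u_dim v_dim N by auto
  obtain w where w: "w \<in> VV n" and uw0: "u \<bullet> w = 1" using u_unimod unfolding unimodular_def N by blast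
  have uw: "(\<Sum>k<NN n. u $ k * w $ k) = 1" using uw0 w unfolding scalar_prod_def by (simp add: atLeast0LessThan)
  have buv: "bf n u v = 0" using uv bform_bf[OF v] by simp
  define H where "H = {1..<NN n}"
  have Hfin: "finite H" unfolding H_def by simp
  have Hsplit: "{..<NN n} = insert 0 H" "0 \<notin> H" unfolding H_def by auto
  have Hmem: "k \<in> H \<longleftrightarrow> k < NN n \<and> k \<noteq> 0" for k unfolding H_def by auto
  define F where "F p = (v $ fst p * w $ snd p) \<cdot>\<^sub>v zz u (fst p) (dual (snd p))" for p
  have FK: "F p \<in> VV n \<and> Good u (F p) \<and> esd_mat n u (F p) \<in> EO n" if p: "p \<in> H \<times> H" for p
    using T[OF n3 u u_iso u0 w uw, of "fst p" "dual (snd p)" "v $ fst p * w $ snd p"] p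
    unfolding F_def by (auto simp: Hmem)
  have sc: "Good u (vec (NN n) (\<lambda>i. \<Sum>p\<in>H \<times> H. F p $ i)) \<and> esd_mat n u (vec (NN n) (\<lambda>i. \<Sum>p\<in>H \<times> H. F p $ i)) \<in> EO n"
    by (rule sum_closed) (use Hfin u u_iso FK in auto)
  have S1: "(\<Sum>k\<in>H. w $ k * u $ k) = 1" using uw unfolding Hsplit(1) using Hsplit(2) Hfin
    by (simp add: u0 mult.commute)
  have S2: "(\<Sum>a\<in>H. v $ a * u $ dual a) = 0"
  proof -
    have "bf n v u = 0" using buv bf_sym by metis
    moreover have "(\<Sum>a\<in>H. v $ a * wt a * u $ dual a) = (\<Sum>a\<in>H. v $ a * u $ dual a)"
      by (rule sum.cong) (auto simp: Hmem)
    ultimately show ?thesis unfolding bf_def Hsplit(1) using Hsplit(2) Hfin by (simp add: v0)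
  qed
  have ident: "vec (NN n) (\<lambda>i. \<Sum>p\<in>H \<times> H. F p $ i) = v"
  proof (rule eq_vecI)
    fix i assume "i < dim_vec v"
    then have i: "i < NN n" using v by simp
    have "(\<Sum>p\<in>H \<times> H. F p $ i) = (\<Sum>a\<in>H. \<Sum>k\<in>H. F (a,k) $ i)"
      by (simp add: sum.cartesian_product)
    also have "\<dots> = (\<Sum>a\<in>H. \<Sum>k\<in>H. (if a = i then v $ a * (w $ k * u $ k) else 0)
        - (if k = dual i then w $ k * (v $ a * u $ dual a) else 0))"
      apply (rule sum.cong[OF refl])
      apply (rule sum.cong[OF refl])
      subgoal for a k using i by (auto simp: F_def zz_idx Hmem algebra_simps)
      done
    also have "\<dots> = (\<Sum>a\<in>H. \<Sum>k\<in>H. (if a = i then v $ a * (w $ k * u $ k) else 0))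
        - (\<Sum>a\<in>H. \<Sum>k\<in>H. (if k = dual i then w $ k * (v $ a * u $ dual a) else 0))"
      by (simp add: sum_subtractf)
    also have "(\<Sum>a\<in>H. \<Sum>k\<in>H. (if a = i then v $ a * (w $ k * u $ k) else 0)) =
        (\<Sum>a\<in>H. (if a = i then v $ a * (\<Sum>k\<in>H. w $ k * u $ k) else 0))"
      by (rule sum.cong[OF refl]) (simp add: sum_distrib_left)
    also have "\<dots> = (if i \<in> H then v $ i else 0)" using Hfin by (simp add: S1 sum.delta')
    also have "(\<Sum>a\<in>H. \<Sum>k\<in>H. (if k = dual i then w $ k * (v $ a * u $ dual a) else 0)) =
        (\<Sum>a\<in>H. (if dual i \<in> H then w $ dual i * (v $ a * u $ dual a) else 0))"
      by (rule sum.cong[OF refl]) (simp add: Hfin sum.delta)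
    also have "\<dots> = (if dual i \<in> H then w $ dual i * (\<Sum>a\<in>H. v $ a * u $ dual a) else 0)"
      by (simp add: sum_distrib_left)
    also have "(if i \<in> H then v $ i else 0) - \<dots> = v $ i"
      using i by (auto simp: S2 Hmem v0)
    finally show "vec (NN n) (\<lambda>i. \<Sum>p\<in>H \<times> H. F p $ i) $ i = v $ i" using i by simp
  qed (use v in simp)
  show ?thesis using sc unfolding ident by simp
qed



end
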